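(* For every $t=0,1,\dots,T-1$, $S^*_t\le S^U_t$.
   Context: Model. Fix an integer horizon $T\ge 2$, a discount factor $\alpha\in(0,1]$, and for $t=0,\dots,T-1$: unit ordering costs $c_t\in\mathbb R$, a salvage coefficient $c_T\in\mathbb R$, setup costs $K_t\ge 0$, functions $G_t:\mathbb R\to\mathbb R$, and independent nonnegative random demands $D_0,\dots,D_{T-1}$ with right-continuous distribution functions $F_t$ and finite means; all expectations appearing are assumed finite. Let $\delta(z)=1$ for $z>0$, $\delta(0)=0$. Put $C_t(y)=(c_t-\alpha c_{t+1})y+G_t(y)+\alpha c_{t+1}E[D_t]$. Standing assumptions: (i) each $C_t$ is convex with $C_t(y)\to+\infty$ as $|y|\to\infty$; (ii) $K_t\ge \alpha K_{t+1}$ for $t=0,\dots,T-2$. Let $V^*_T\equiv 0$, and for $t=T-1,\dots,0$: $H^*_t(y)=C_t(y)+\alpha E[V^*_{t+1}(y-D_t)]$, $V^*_t(x)=\min_{y\ge x}\{K_t\delta(y-x)+H^*_t(y)\}$, and $S^*_t=\min\{x: H^*_t(x)=\min_{y\in\mathbb R}H^*_t(y)\}$. Fix $\theta>0$, $z_m=m\theta$, $Z_\theta=\{z_m:m\in\mathbb Z\}$. Let $C^m_t=\min\{y: C_t(y)=\min_x C_t(x)\}$; with $n_0$ the integer such that $z_{n_0}<C^m_t\le z_{n_0+1}$, let $S^U_t=\min\{z_m\in Z_\theta: z_m\ge C^m_t,\ C_t(z_m)>C_t(z_{n_0})+K_t\}$. *)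

theory Defs
  imports "HOL-Probability.Probability"
begin

definition dlt :: "real \<Rightarrow> real" where
  "dlt z = (if z > 0 then 1 else 0)"

definition Cfun :: "real \<Rightarrow> (nat \<Rightarrow> real) \<Rightarrow> (nat \<Rightarrow> real \<Rightarrow> real)
    \<Rightarrow> 'a measure \<Rightarrow> (nat \<Rightarrow> 'a \<Rightarrow> real) \<Rightarrow> nat \<Rightarrow> real \<Rightarrow> real" where
  "Cfun \<alpha> c G M D t y =
     (c t - \<alpha> * c (Suc t)) * y + G t y + \<alpha> * c (Suc t) * (\<integral>\<omega>. D t \<omega> \<partial>M)"

text \<open>Value function by backward recursion; Vr ... T n is V*_{T-n}.
  V*_t(x) = min_{y >= x} { K_t delta(y-x) + H*_t(y) } (rendered as an infimum).\<close>
primrec Vr :: "real \<Rightarrow> (nat \<Rightarrow> real) \<Rightarrow> (nat \<Rightarrow> real) \<Rightarrow> (nat \<Rightarrow> real \<Rightarrow> real)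
    \<Rightarrow> 'a measure \<Rightarrow> (nat \<Rightarrow> 'a \<Rightarrow> real) \<Rightarrow> nat \<Rightarrow> nat \<Rightarrow> real \<Rightarrow> real" where
  "Vr \<alpha> c K G M D T 0 = (\<lambda>x. 0)"
| "Vr \<alpha> c K G M D T (Suc n) = (\<lambda>x.
     Inf ((\<lambda>y. K (T - Suc n) * dlt (y - x) + Cfun \<alpha> c G M D (T - Suc n) y
             + \<alpha> * (\<integral>\<omega>. Vr \<alpha> c K G M D T n (y - D (T - Suc n) \<omega>) \<partial>M)) ` {x..}))"

definition Vstar where
  "Vstar \<alpha> c K G M D T t = Vr \<alpha> c K G M D T (T - t)"

definition Hstar where
  "Hstar \<alpha> c K G M D T t y =
     Cfun \<alpha> c G M D t y + \<alpha> * (\<integral>\<omega>. Vstar \<alpha> c K G M D T (Suc t) (y - D t \<omega>) \<partial>M)"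

definition Sstar where
  "Sstar \<alpha> c K G M D T t =
     (LEAST x. Hstar \<alpha> c K G M D T t x = Inf (range (Hstar \<alpha> c K G M D T t)))"

definition Cmin where
  "Cmin \<alpha> c G M D t = (LEAST y. Cfun \<alpha> c G M D t y = Inf (range (Cfun \<alpha> c G M D t)))"

definition n0 where
  "n0 \<theta> \<alpha> c G M D t =
     (THE n::int. real_of_int n * \<theta> < Cmin \<alpha> c G M D t \<and> Cmin \<alpha> c G M D t \<le> real_of_int (n + 1) * \<theta>)"

definition SU where
  "SU \<theta> \<alpha> c K G M D t =
     (LEAST z. (\<exists>m::int. z = real_of_int m * \<theta>) \<and> z \<ge> Cmin \<alpha> c G M D t \<and>
        Cfun \<alpha> c G M D t z > Cfun \<alpha> c G M D t (real_of_int (n0 \<theta> \<alpha> c G M D t) * \<theta>) + K t)"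

end

theory Submission imports Defs begin

lemma least_minimizer:
  fixes f :: "real \<Rightarrow> real"
  assumes cont: "continuous_on UNIV f" and top: "filterlim f at_top at_top"
    and bot: "filterlim f at_top at_bot"
  shows "\<exists>x. (\<forall>y. f x \<le> f y) \<and> f x = Inf (range f) \<and> (\<forall>y. f y = Inf (range f) \<longrightarrow> x \<le> y)"
proof -
  have "eventually (\<lambda>x. f 0 + 1 \<le> f x) at_top" using top by (simp add: filterlim_at_top)
  then obtain R1 where R1: "\<And>x. x \<ge> R1 \<Longrightarrow> f 0 + 1 \<le> f x" by (auto simp: eventually_at_top_linorder)
  have "eventually (\<lambda>x. f 0 + 1 \<le> f x) at_bot" using bot by (simp add: filterlim_at_top)
  then obtain R2 where R2: "\<And>x. x \<le> R2 \<Longrightarrow> f 0 + 1 \<le> f x" by (auto simp: eventually_at_bot_linorder)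
  obtain x where x: "x \<in> {min R2 0..max R1 0}" "\<And>y. y \<in> {min R2 0..max R1 0} \<Longrightarrow> f x \<le> f y"
  proof -
    have "continuous_on {min R2 0..max R1 0} f" using cont by (rule continuous_on_subset) auto
    then have "\<exists>x\<in>{min R2 0..max R1 0}. \<forall>y\<in>{min R2 0..max R1 0}. f x \<le> f y"
      by (intro continuous_attains_inf) auto
    then show ?thesis using that by blast
  qed
  have fx0: "f x \<le> f 0" using x(2)[of 0] by auto
  have glob: "f x \<le> f y" for y
  proof (cases "y \<in> {min R2 0..max R1 0}")
    case True then show ?thesis using x by auto
  next
    case False
    then have "y \<ge> R1 \<or> y \<le> R2" by auto
    then show ?thesis using R1 R2 fx0 by force
  qed
  have infx: "Inf (range f) = f x" by (rule cInf_eq_minimum) (use glob in auto)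
  define S where "S = {y. f y = f x}"
  have "closed S" unfolding S_def
    by (rule closed_Collect_eq) (use cont in \<open>auto intro: continuous_on_const\<close>)
  moreover have "S \<noteq> {}" using S_def by auto
  moreover have "bdd_below S"
  proof (rule bdd_belowI)
    fix y assume "y \<in> S"
    then have "f y = f x" by (simp add: S_def)
    then show "R2 \<le> y" using R2[of y] fx0 by (cases "y \<le> R2") auto
  qed
  ultimately have sS: "Inf S \<in> S" by (rule closed_contains_Inf[rotated -1])
  have "\<forall>y. f y = Inf (range f) \<longrightarrow> Inf S \<le> y"
    using \<open>bdd_below S\<close> by (auto simp: infx S_def intro: cInf_lower)
  moreover have "\<forall>y. f (Inf S) \<le> f y" using sS glob by (auto simp: S_def)
  moreover have "f (Inf S) = Inf (range f)" using sS infx by (auto simp: S_def)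
  ultimately show ?thesis by blast
qed

lemma least_minimizer_Least:
  fixes f :: "real \<Rightarrow> real"
  assumes cont: "continuous_on UNIV f" and top: "filterlim f at_top at_top"
    and bot: "filterlim f at_top at_bot"
  shows "f (LEAST x. f x = Inf (range f)) \<le> f y"
proof -
  obtain x where x: "\<forall>y. f x \<le> f y" "f x = Inf (range f)" "\<forall>y. f y = Inf (range f) \<longrightarrow> x \<le> y"
    using least_minimizer[OF assms] by blast
  show ?thesis
    by (rule LeastI2_order[of _ x]) (use x in auto)
qed

lemma tail_inf_cont:
  fixes f :: "real \<Rightarrow> real"
  assumes cont: "continuous_on UNIV f" and lb: "\<And>y. b \<le> f y"
  shows "continuous_on UNIV (\<lambda>x. Inf (f ` {x..}))"
proof -
  define m where "m x = Inf (f ` {x..})" for x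
  have bdd: "bdd_below (f ` {x..})" for x by (rule bdd_belowI[of _ b]) (use lb in auto)
  have mle: "m x \<le> f y" if "x \<le> y" for x y
    unfolding m_def by (rule cInf_lower) (use that bdd in auto)
  have mge: "L \<le> m x" if "\<And>y. x \<le> y \<Longrightarrow> L \<le> f y" for x L
    unfolding m_def by (rule cInf_greatest) (use that in auto)
  have mmono: "m x \<le> m x'" if "x \<le> x'" for x x'
    by (rule mge) (use that mle in auto)
  have "isCont m x" for x
  proof (rule continuous_at_eps_delta[THEN iffD2], intro allI impI)
    fix e :: real assume e: "e > 0"
    have "isCont f x" using cont by (simp add: continuous_on_eq_continuous_at)
    then obtain d where d: "d > 0" "\<And>y. dist y x < d \<Longrightarrow> dist (f y) (f x) < e/3"
      using continuous_at_eps_delta e by (metis divide_pos_pos zero_less_numeral)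
    have "dist (m x') (m x) < e" if x': "dist x' x < d" for x'
    proof (cases "x' \<le> x")
      case True
      have "m x - e/3 \<le> m x'"
      proof (rule mge)
        fix y assume y: "x' \<le> y"
        show "m x - e/3 \<le> f y"
        proof (cases "x \<le> y")
          case True then show ?thesis using mle[of x y] e by auto
        next
          case False
          then have "dist y x < d" using y x' True by (auto simp: dist_real_def)
          from d(2)[OF this] have "f x - e/3 < f y" unfolding dist_real_def by linarith
          then show ?thesis using mle[of x x] by auto
        qed
      qed
      then show ?thesis using mmono[OF True] e by (auto simp: dist_real_def)
    next
      case False
      have mx': "m x' < f x + e/3"
        using mle[of x' x'] d(2)[OF x'] unfolding dist_real_def by linarith
      have "m x' - 2*e/3 \<le> m x"
      proof (rule mge)
        fix y assume y: "x \<le> y"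
        show "m x' - 2*e/3 \<le> f y"
        proof (cases "x' \<le> y")
          case True then show ?thesis using mle[of x' y] e by auto
        next
          case False2: False
          then have "dist y x < d" using y x' False by (auto simp: dist_real_def)
          from d(2)[OF this] have "f x - e/3 < f y" unfolding dist_real_def by linarith
          then show ?thesis using mx' by auto
        qed
      qed
      then show ?thesis using mmono[of x x'] False e by (auto simp: dist_real_def)
    qed
    then show "\<exists>d>0. \<forall>x'. dist x' x < d \<longrightarrow> dist (m x') (m x) < e" using d(1) by blast
  qed
  then show ?thesis unfolding m_def[abs_def] by (simp add: continuous_on_eq_continuous_at)
qed

lemma W_props:
  fixes f :: "real \<Rightarrow> real"
  assumes cont: "continuous_on UNIV f" and lb: "\<And>y. b \<le> f y" and k: "0 \<le> k"
  defines "W \<equiv> \<lambda>x. Inf ((\<lambda>y. k * dlt (y - x) + f y) ` {x..})"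
  shows "continuous_on UNIV W" "\<And>x. b \<le> W x" "\<And>x x'. x \<le> x' \<Longrightarrow> W x \<le> k + W x'"
proof -
  define m where "m x = Inf (f ` {x..})" for x
  have bdd: "bdd_below (f ` {x..})" for x by (rule bdd_belowI[of _ b]) (use lb in auto)
  have mle: "m x \<le> f y" if "x \<le> y" for x y
    unfolding m_def by (rule cInf_lower) (use that bdd in auto)
  have mge: "L \<le> m x" if "\<And>y. x \<le> y \<Longrightarrow> L \<le> f y" for x L
    unfolding m_def by (rule cInf_greatest) (use that in auto)
  have dlt01: "0 \<le> dlt z" "dlt z \<le> 1" for z by (auto simp: dlt_def)
  have bddW: "bdd_below ((\<lambda>y. k * dlt (y - x) + f y) ` {x..})" for x
    by (rule bdd_belowI[of _ b]) (use lb k dlt01 in \<open>auto intro!: add_nonneg_nonneg[THEN order_trans] simp: add_increasing\<close>)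
  have Weq: "W x = min (f x) (k + m x)" for x
  proof (rule antisym)
    have "W x \<le> f x"
      unfolding W_def by (rule cInf_lower2[of "f x"]) (use bddW in \<open>auto simp: dlt_def intro!: image_eqI[of _ _ x]\<close>)
    moreover have "W x - k \<le> m x"
    proof (rule mge)
      fix y assume y: "x \<le> y"
      have "W x \<le> k * dlt (y - x) + f y"
        unfolding W_def by (rule cInf_lower) (use bddW y in auto)
      also have "\<dots> \<le> k + f y" using dlt01[of "y-x"] k by (simp add: mult_left_le)
      finally show "W x - k \<le> f y" by simp
    qed
    ultimately show "W x \<le> min (f x) (k + m x)" by simp
    show "min (f x) (k + m x) \<le> W x"
      unfolding W_def
    proof (rule cInf_greatest)
      show "(\<lambda>y. k * dlt (y - x) + f y) ` {x..} \<noteq> {}" by auto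
      fix z assume "z \<in> (\<lambda>y. k * dlt (y - x) + f y) ` {x..}"
      then obtain y where y: "x \<le> y" "z = k * dlt (y - x) + f y" by auto
      show "min (f x) (k + m x) \<le> z"
      proof (cases "y = x")
        case True then show ?thesis using y by (simp add: dlt_def)
      next
        case False then show ?thesis using y mle[of x y] by (simp add: dlt_def)
      qed
    qed
  qed
  have mc: "continuous_on UNIV m" unfolding m_def[abs_def] by (rule tail_inf_cont[OF cont lb])
  show "continuous_on UNIV W" unfolding Weq[abs_def]
    by (intro continuous_on_min continuous_on_add continuous_on_const cont mc)
  show "b \<le> W x" for x
    using lb[of x] mge[of x b] lb k unfolding Weq by auto
  show "W x \<le> k + W x'" if "x \<le> x'" for x x'
  proof -
    have "m x \<le> m x'" by (rule mge) (use that mle in auto)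
    moreover have "m x' \<le> W x'" unfolding Weq using mle[of x' x'] k by auto
    ultimately show ?thesis unfolding Weq[of x] by auto
  qed
qed

lemma cont_expect:
  fixes V :: "real \<Rightarrow> real" and X :: "'a \<Rightarrow> real"
  assumes Vc: "continuous_on UNIV V" and lb: "\<And>x. b \<le> V x"
    and mono: "\<And>x x'. x \<le> x' \<Longrightarrow> V x \<le> k + V x'"
    and int: "\<And>y. integrable M (\<lambda>\<omega>. V (y - X \<omega>))"
    and fin: "finite_measure M"
  shows "continuous_on UNIV (\<lambda>y. \<integral>\<omega>. V (y - X \<omega>) \<partial>M)"
proof -
  have "isCont (\<lambda>y. \<integral>\<omega>. V (y - X \<omega>) \<partial>M) y0" for y0
  proof (rule continuous_at_sequentiallyI)
    fix s :: "nat \<Rightarrow> real" assume s: "s \<longlonglongrightarrow> y0"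
    then have "Bseq s" by (intro convergent_imp_Bseq convergentI)
    then obtain B where B: "\<And>n. norm (s n) \<le> B" by (auto simp: Bseq_def)
    define w where "w \<omega> = \<bar>b\<bar> + \<bar>k\<bar> + \<bar>V (B - X \<omega>)\<bar>" for \<omega>
    show "(\<lambda>i. \<integral>\<omega>. V (s i - X \<omega>) \<partial>M) \<longlonglongrightarrow> (\<integral>\<omega>. V (y0 - X \<omega>) \<partial>M)"
    proof (rule integral_dominated_convergence[where w=w])
      show "(\<lambda>\<omega>. V (y0 - X \<omega>)) \<in> borel_measurable M" using int by auto
      show "(\<lambda>\<omega>. V (s i - X \<omega>)) \<in> borel_measurable M" for i using int by auto
      show "integrable M w" unfolding w_def
        using Bochner_Integration.integrable_add[OF finite_measure.integrable_const[OF fin, of "\<bar>b\<bar>+\<bar>k\<bar>"] integrable_abs[OF int[of B]]]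
        by simp
      show "AE \<omega> in M. (\<lambda>i. V (s i - X \<omega>)) \<longlonglongrightarrow> V (y0 - X \<omega>)"
      proof (rule AE_I2)
        fix \<omega>
        have "isCont V (y0 - X \<omega>)" using Vc by (simp add: continuous_on_eq_continuous_at)
        moreover have "(\<lambda>i. s i - X \<omega>) \<longlonglongrightarrow> y0 - X \<omega>" by (intro tendsto_intros s)
        ultimately show "(\<lambda>i. V (s i - X \<omega>)) \<longlonglongrightarrow> V (y0 - X \<omega>)" by (rule isCont_tendsto_compose)
      qed
      show "AE \<omega> in M. norm (V (s i - X \<omega>)) \<le> w \<omega>" for i
      proof (rule AE_I2)
        fix \<omega>
        have "s i \<le> B" using B[of i] by auto
        then have "V (s i - X \<omega>) \<le> k + V (B - X \<omega>)" by (intro mono) auto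
        then show "norm (V (s i - X \<omega>)) \<le> w \<omega>" using lb[of "s i - X \<omega>"] unfolding w_def by auto
      qed
    qed
  qed
  then show ?thesis by (simp add: continuous_on_eq_continuous_at)
qed

lemma convex_mono_right:
  fixes f :: "real \<Rightarrow> real"
  assumes cv: "convex_on UNIV f" and mn: "\<And>y. f m \<le> f y" and mu: "m \<le> u" and us: "u \<le> s"
  shows "f u \<le> f s"
proof (cases "s = m")
  case True then show ?thesis using mu us by auto
next
  case False
  then have sm: "s - m > 0" using mu us by auto
  define t where "t = (u - m) / (s - m)"
  have t01: "0 \<le> t" "t \<le> 1" using sm mu us by (auto simp: t_def field_simps)
  have e: "t * (s - m) = u - m" using sm by (simp add: t_def)
  have "u = (1 - t) *\<^sub>R m + t *\<^sub>R s" using e by (simp add: algebra_simps)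
  then have "f u \<le> (1 - t) * f m + t * f s"
    using convex_onD[OF cv t01] by simp
  also have "\<dots> \<le> (1 - t) * f s + t * f s"
    using mn[of s] t01 by (intro add_right_mono mult_left_mono) auto
  finally show ?thesis by (simp add: algebra_simps)
qed


theorem lemma4p7:
  fixes T :: nat and \<alpha> \<theta> :: real and c K :: "nat \<Rightarrow> real"
    and G :: "nat \<Rightarrow> real \<Rightarrow> real" and M :: "'a measure" and D :: "nat \<Rightarrow> 'a \<Rightarrow> real"
  assumes T2: "T \<ge> 2"
    and alpha: "0 < \<alpha>" "\<alpha> \<le> 1"
    and theta: "\<theta> > 0"
    and K_nonneg: "\<And>t. t < T \<Longrightarrow> K t \<ge> 0"
    and K_dec: "\<And>t. t + 2 \<le> T \<Longrightarrow> K t \<ge> \<alpha> * K (Suc t)"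
    and prob: "prob_space M"
    and D_rv: "\<And>t. t < T \<Longrightarrow> D t \<in> borel_measurable M"
    and D_indep: "prob_space.indep_vars M (\<lambda>_. borel) D {..<T}"
    and D_nonneg: "\<And>t. t < T \<Longrightarrow> AE \<omega> in M. D t \<omega> \<ge> 0"
    and D_mean: "\<And>t. t < T \<Longrightarrow> integrable M (D t)"
    and V_int: "\<And>t y. t < T \<Longrightarrow>
                  integrable M (\<lambda>\<omega>. Vstar \<alpha> c K G M D T (Suc t) (y - D t \<omega>))"
    and C_convex: "\<And>t. t < T \<Longrightarrow> convex_on UNIV (Cfun \<alpha> c G M D t)"
    and C_top: "\<And>t. t < T \<Longrightarrow> filterlim (Cfun \<alpha> c G M D t) at_top at_top"
    and C_bot: "\<And>t. t < T \<Longrightarrow> filterlim (Cfun \<alpha> c G M D t) at_top at_bot"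
  shows "\<forall>t < T. Sstar \<alpha> c K G M D T t \<le> SU \<theta> \<alpha> c K G M D t"
proof -
  interpret P: prob_space M by (rule prob)
  have fin: "finite_measure M" using prob unfolding prob_space_def by blast
  define C where "C = Cfun \<alpha> c G M D"
  define H where "H = Hstar \<alpha> c K G M D T"
  define V where "V = Vstar \<alpha> c K G M D T"
  define Kn where "Kn t = (if t < T then K t else 0)" for t
  have VT: "V T = (\<lambda>x. 0)" by (simp add: V_def Vstar_def)
  have Vrec: "V t x = Inf ((\<lambda>y. K t * dlt (y - x) + H t y) ` {x..})" if "t < T" for t x
  proof -
    have e: "T - t = Suc (T - Suc t)" using that by simp
    have e2: "T - Suc (T - Suc t) = t" using that by simp
    show ?thesis unfolding V_def H_def Vstar_def Hstar_def e Vr.simps e2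
      by (simp add: add.assoc)
  qed
  have Hdef: "H t y = C t y + \<alpha> * (\<integral>\<omega>. V (Suc t) (y - D t \<omega>) \<partial>M)" for t y
    by (simp add: H_def Hstar_def C_def V_def)
  have Vint: "integrable M (\<lambda>\<omega>. V (Suc t) (y - D t \<omega>))" if "t < T" for t y
    using V_int[OF that] by (simp add: V_def)
  have Ccont: "continuous_on UNIV (C t)" if "t < T" for t
    unfolding C_def by (rule convex_on_continuous[OF open_UNIV C_convex[OF that]])
  have Cmin_ex: "\<exists>x0. \<forall>y. C t x0 \<le> C t y" if "t < T" for t
    using least_minimizer[OF Ccont[OF that]] C_top[OF that] C_bot[OF that] unfolding C_def by blast
  have Hprops: "continuous_on UNIV (H t) \<and> (\<forall>y. C t y + \<alpha> * b \<le> H t y) \<and>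
      (\<forall>z s. z \<le> s \<longrightarrow> H t z \<le> H t s + C t z - C t s + \<alpha> * Kn (Suc t))"
    if t: "t < T" and Vc: "continuous_on UNIV (V (Suc t))" and lb: "\<And>x. b \<le> V (Suc t) x"
      and mono: "\<And>x x'. x \<le> x' \<Longrightarrow> V (Suc t) x \<le> Kn (Suc t) + V (Suc t) x'" for t b
  proof (intro conjI allI impI)
    have ce: "continuous_on UNIV (\<lambda>y. \<integral>\<omega>. V (Suc t) (y - D t \<omega>) \<partial>M)"
      by (rule cont_expect[OF Vc lb mono Vint[OF t] fin])
    show "continuous_on UNIV (H t)" unfolding Hdef[abs_def]
      by (intro continuous_on_add continuous_on_mult_left Ccont t ce)
    fix y
    have "b \<le> (\<integral>\<omega>. V (Suc t) (y - D t \<omega>) \<partial>M)"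
      by (rule P.integral_ge_const[OF Vint[OF t]]) (use lb in auto)
    then show "C t y + \<alpha> * b \<le> H t y" unfolding Hdef using alpha by simp
  next
    fix z s :: real assume zs: "z \<le> s"
    have "(\<integral>\<omega>. V (Suc t) (z - D t \<omega>) \<partial>M) \<le> (\<integral>\<omega>. Kn (Suc t) + V (Suc t) (s - D t \<omega>) \<partial>M)"
      by (rule integral_mono) (use Vint[OF t] fin zs mono in \<open>auto intro: finite_measure.integrable_const\<close>)
    also have "\<dots> = Kn (Suc t) + (\<integral>\<omega>. V (Suc t) (s - D t \<omega>) \<partial>M)"
      using Vint[OF t] by (simp add: P.prob_space)
    finally show "H t z \<le> H t s + C t z - C t s + \<alpha> * Kn (Suc t)"
      unfolding Hdef using alpha by (simp add: algebra_simps) (metis mult_left_mono distrib_left less_imp_le)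
  qed
  have Q: "continuous_on UNIV (V (T - n)) \<and> (\<exists>b. \<forall>x. b \<le> V (T - n) x) \<and>
      (\<forall>x x'. x \<le> x' \<longrightarrow> V (T - n) x \<le> Kn (T - n) + V (T - n) x')" if "n \<le> T" for n
    using that
  proof (induction n)
    case 0 then show ?case by (auto simp: VT Kn_def intro!: exI[of _ 0])
  next
    case (Suc n)
    define t where "t = T - Suc n"
    have t: "t < T" and st: "Suc t = T - n" using Suc.prems by (auto simp: t_def)
    from Suc.IH Suc.prems obtain b where
      Vc: "continuous_on UNIV (V (Suc t))" and lb: "\<And>x. b \<le> V (Suc t) x"
      and mono: "\<And>x x'. x \<le> x' \<Longrightarrow> V (Suc t) x \<le> Kn (Suc t) + V (Suc t) x'"
      unfolding st by auto
    note HP = Hprops[OF t Vc lb mono]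
    obtain x0 where x0: "\<And>y. C t x0 \<le> C t y" using Cmin_ex[OF t] by blast
    have Hlb: "C t x0 + \<alpha> * b \<le> H t y" for y using HP x0[of y] by (meson add_right_mono order_trans)
    have Veq: "V t = (\<lambda>x. Inf ((\<lambda>y. K t * dlt (y - x) + H t y) ` {x..}))"
      using Vrec[OF t] by (simp add: fun_eq_iff)
    note W = W_props[OF conjunct1[OF HP] Hlb K_nonneg[OF t]]
    show ?case unfolding t_def[symmetric] Veq using W t by (auto simp: Kn_def)
  qed
  show ?thesis
  proof (intro allI impI)
    fix t assume t: "t < T"
    from Q[of "T - Suc t"] t obtain b where
      Vc: "continuous_on UNIV (V (Suc t))" and lb: "\<And>x. b \<le> V (Suc t) x"
      and mono: "\<And>x x'. x \<le> x' \<Longrightarrow> V (Suc t) x \<le> Kn (Suc t) + V (Suc t) x'"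
      by (auto simp: Suc_diff_Suc)
    note HP = Hprops[OF t Vc lb mono]
    have Htop: "filterlim (H t) at_top at_top"
      by (rule filterlim_at_top_mono[OF filterlim_tendsto_add_at_top[OF tendsto_const[of "\<alpha> * b"] C_top[OF t]]])
         (use HP in \<open>auto simp: C_def add.commute\<close>)
    have Hbot: "filterlim (H t) at_top at_bot"
      by (rule filterlim_at_top_mono[OF filterlim_tendsto_add_at_top[OF tendsto_const[of "\<alpha> * b"] C_bot[OF t]]])
         (use HP in \<open>auto simp: C_def add.commute\<close>)
    define s where "s = Sstar \<alpha> c K G M D T t"
    have smin: "H t s \<le> H t y" for y
      unfolding s_def Sstar_def H_def[symmetric]
      by (rule least_minimizer_Least[OF conjunct1[OF HP] Htop Hbot])
    define cm where "cm = Cmin \<alpha> c G M D t"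
    have cmin: "C t cm \<le> C t y" for y
      unfolding cm_def Cmin_def C_def
      by (rule least_minimizer_Least[OF Ccont[OF t, unfolded C_def] C_top[OF t] C_bot[OF t]])
    define n where "n = n0 \<theta> \<alpha> c G M D t"
    have nprop: "real_of_int n * \<theta> < cm \<and> cm \<le> real_of_int (n + 1) * \<theta>"
    proof -
      have iff: "(real_of_int m * \<theta> < cm \<and> cm \<le> real_of_int (m + 1) * \<theta>) \<longleftrightarrow> \<lceil>cm / \<theta>\<rceil> = m + 1" for m
        using theta by (simp add: ceiling_eq_iff pos_less_divide_eq pos_divide_le_eq)
      have "\<exists>!m. real_of_int m * \<theta> < cm \<and> cm \<le> real_of_int (m + 1) * \<theta>"
        unfolding iff by (rule ex1I[of _ "\<lceil>cm / \<theta>\<rceil> - 1"]) auto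
      from theI'[OF this] show ?thesis unfolding n_def n0_def cm_def .
    qed
    define z0 where "z0 = real_of_int n * \<theta>"
    define Z where "Z z \<longleftrightarrow> (\<exists>m::int. z = real_of_int m * \<theta>) \<and> z \<ge> cm \<and> C t z > C t z0 + K t" for z
    have Zex: "\<exists>u. Z u \<and> (\<forall>z. Z z \<longrightarrow> u \<le> z)"
    proof -
      have "eventually (\<lambda>x. C t z0 + K t + 1 \<le> C t x) at_top"
        using C_top[OF t] by (simp add: filterlim_at_top C_def)
      then obtain R where R: "\<And>x. x \<ge> R \<Longrightarrow> C t z0 + K t + 1 \<le> C t x"
        by (auto simp: eventually_at_top_linorder)
      define m1 where "m1 = \<lceil>max R cm / \<theta>\<rceil>"
      have "max R cm / \<theta> \<le> real_of_int m1" unfolding m1_def by (rule le_of_int_ceiling)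
      then have "max R cm \<le> real_of_int m1 * \<theta>"
        using theta by (simp add: pos_divide_le_eq)
      then have Zm1: "Z (real_of_int m1 * \<theta>)" unfolding Z_def using R[of "real_of_int m1 * \<theta>"] by force
      define L where "L = \<lfloor>cm / \<theta>\<rfloor>"
      have Lle: "L \<le> m" if "Z (real_of_int m * \<theta>)" for m
      proof -
        have "cm \<le> real_of_int m * \<theta>" using that by (simp add: Z_def)
        then have "cm / \<theta> \<le> real_of_int m" using theta by (simp add: pos_divide_le_eq)
        then show ?thesis unfolding L_def by linarith
      qed
      define J where "J = {k::nat. Z (real_of_int (L + int k) * \<theta>)}"
      have "nat (m1 - L) \<in> J" using Zm1 Lle[OF Zm1] by (simp add: J_def)
      then have k0J: "(LEAST k. k \<in> J) \<in> J" by (rule LeastI)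
      define u where "u = real_of_int (L + int (LEAST k. k \<in> J)) * \<theta>"
      have "Z u" using k0J by (simp add: J_def u_def)
      moreover have "u \<le> z" if Zz: "Z z" for z
      proof -
        obtain m where m: "z = real_of_int m * \<theta>" using Zz by (auto simp: Z_def)
        have Lm: "L \<le> m" using Lle Zz m by simp
        have "nat (m - L) \<in> J" using Zz m Lm by (simp add: J_def)
        then have "(LEAST k. k \<in> J) \<le> nat (m - L)" by (rule Least_le)
        then have "L + int (LEAST k. k \<in> J) \<le> m" using Lm by linarith
        then show ?thesis unfolding u_def m using theta by (simp add: mult_right_mono)
      qed
      ultimately show ?thesis by blast
    qed
    define u where "u = SU \<theta> \<alpha> c K G M D t"
    have Zu: "Z u"
    proof -
      from Zex obtain u0 where u0: "Z u0" "\<And>z. Z z \<Longrightarrow> u0 \<le> z" by blast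
      have "SU \<theta> \<alpha> c K G M D t = (LEAST z. Z z)"
        by (simp add: SU_def Z_def C_def z0_def n_def cm_def)
      then show ?thesis unfolding u_def by (metis LeastI2_order u0)
    qed
    show "Sstar \<alpha> c K G M D T t \<le> SU \<theta> \<alpha> c K G M D t"
    proof (rule ccontr)
      assume "\<not> ?thesis"
      then have us: "u < s" by (simp add: s_def u_def)
      have cmu: "cm \<le> u" and Cu: "C t u > C t z0 + K t" using Zu by (auto simp: Z_def)
      have z0s: "z0 \<le> s" using nprop cmu us by (simp add: z0_def)
      have "C t u \<le> C t s"
        by (rule convex_mono_right[OF C_convex[OF t, folded C_def] cmin cmu]) (use us in simp)
      moreover have "H t z0 \<le> H t s + C t z0 - C t s + \<alpha> * Kn (Suc t)" using HP z0s by blast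
      moreover have "H t s \<le> H t z0" by (rule smin)
      moreover have "\<alpha> * Kn (Suc t) \<le> K t"
        using K_dec[of t] K_nonneg[OF t] by (auto simp: Kn_def)
      ultimately show False using Cu by linarith
    qed
  qed
qed

end
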